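(* For any $\lambda\in[0,1)$: $\mathbb{L}^{=1}(\mathrm{QBA}|\mathrm{D})\not\subseteq\mathbb{L}^{>\lambda}(\mathrm{QBA}|\mathrm{D})$.
   Context: A quantum automaton is a tuple $\mathcal{A}=(\mathcal{H},|s_0\rangle,\Sigma,\{U_\sigma:\sigma\in\Sigma\},F)$ where $\mathcal{H}$ is a finite-dimensional complex Hilbert space, $|s_0\rangle$ a unit vector, $\Sigma$ a finite alphabet, each $U_\sigma$ unitary, and $F$ a subspace. For $w=\sigma_1\sigma_2\cdots\in\Sigma^\omega$, a unit vector $|\psi\rangle\in F$ and checkpoints $0\le n_1<n_2<\cdots$, the disturbing run is $|s_0\rangle$ (initial state) and for $n\ge1$: $|s_n\rangle=U_{\sigma_n}|\psi\rangle$ if $n-1=n_i$ for some $i$, else $|s_n\rangle=U_{\sigma_n}|s_{n-1}\rangle$. Then $f^{\mathrm{D}}_{\mathcal{A}}(w)=\sup_{|\psi\rangle}\sup_{\{n_i\}}\inf_{i\ge1}|\langle\psi|s_{n_i}\rangle|^2$ over unit $|\psi\rangle\in F$ and strictly increasing checkpoint sequences. $\mathcal{L}^{=1}(\mathcal{A}|\mathrm{D})=\{w\in\Sigma^\omega:f^{\mathrm{D}}_{\mathcal{A}}(w)=1\}$, $\mathcal{L}^{>\lambda}(\mathcal{A}|\mathrm{D})=\{w:f^{\mathrm{D}}_{\mathcal{A}}(w)>\lambda\}$; $\mathbb{L}^{=1}(\mathrm{QBA}|\mathrm{D})$ and $\mathbb{L}^{>\lambda}(\mathrm{QBA}|\mathrm{D})$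 are the classes of all such languages as $\mathcal{A}$ ranges over all quantum automata. *)

theory Defs
  imports Complex_Main "Jordan_Normal_Form.Schur_Decomposition"
begin

text \<open>An automaton is given by (d, s0, Sig, U, F) with U :: nat => complex mat
  (only U sigma for sigma in Sig matter) and F a subspace of C^d.\<close>

definition unit_vec_c :: "nat \<Rightarrow> complex vec \<Rightarrow> bool" where
  "unit_vec_c d v \<longleftrightarrow> v \<in> carrier_vec d \<and> v \<bullet>c v = 1"

definition unitary_c :: "nat \<Rightarrow> complex mat \<Rightarrow> bool" where
  "unitary_c d U \<longleftrightarrow> U \<in> carrier_mat d d \<and> mat_adjoint U * U = 1\<^sub>m d \<and> U * mat_adjoint U = 1\<^sub>m d"

definition subspace_c :: "nat \<Rightarrow> complex vec set \<Rightarrow> bool" where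
  "subspace_c d F \<longleftrightarrow> F \<subseteq> carrier_vec d \<and> 0\<^sub>v d \<in> F \<and>
     (\<forall>x\<in>F. \<forall>y\<in>F. x + y \<in> F) \<and> (\<forall>c. \<forall>x\<in>F. c \<cdot>\<^sub>v x \<in> F)"

definition quantum_automaton ::
  "nat \<Rightarrow> complex vec \<Rightarrow> nat set \<Rightarrow> (nat \<Rightarrow> complex mat) \<Rightarrow> complex vec set \<Rightarrow> bool" where
  "quantum_automaton d s0 Sig U F \<longleftrightarrow>
     unit_vec_c d s0 \<and> finite Sig \<and> Sig \<noteq> {} \<and>
     (\<forall>\<sigma>\<in>Sig. unitary_c d (U \<sigma>)) \<and> subspace_c d F"

text \<open>Infinite words over Sig: w i is the (i+1)-th letter sigma_{i+1}.\<close>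
definition omega_words :: "nat set \<Rightarrow> (nat \<Rightarrow> nat) set" where
  "omega_words Sig = {w. \<forall>i. w i \<in> Sig}"

text \<open>Disturbing run: run s0 U w psi ns m = |s_m>, with checkpoints n_1 < n_2 < ...
  given as ns 0 < ns 1 < ...\<close>
fun dist_run :: "complex vec \<Rightarrow> (nat \<Rightarrow> complex mat) \<Rightarrow> (nat \<Rightarrow> nat) \<Rightarrow> complex vec
     \<Rightarrow> (nat \<Rightarrow> nat) \<Rightarrow> nat \<Rightarrow> complex vec" where
  "dist_run s0 U w psi ns 0 = s0"
| "dist_run s0 U w psi ns (Suc m) =
     U (w m) *\<^sub>v (if m \<in> range ns then psi else dist_run s0 U w psi ns m)"

definition fD :: "nat \<Rightarrow> complex vec \<Rightarrow> (nat \<Rightarrow> complex mat) \<Rightarrow> complex vec set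
     \<Rightarrow> (nat \<Rightarrow> nat) \<Rightarrow> real" where
  "fD d s0 U F w =
    (let S = {(INF i. (cmod (dist_run s0 U w psi ns (ns i) \<bullet>c psi))\<^sup>2) | psi ns.
                 psi \<in> F \<and> unit_vec_c d psi \<and> strict_mono ns}
     in if S = {} then 0 else Sup S)"

definition lang_eq1 :: "nat \<Rightarrow> complex vec \<Rightarrow> nat set \<Rightarrow> (nat \<Rightarrow> complex mat) \<Rightarrow> complex vec set
     \<Rightarrow> (nat \<Rightarrow> nat) set" where
  "lang_eq1 d s0 Sig U F = {w \<in> omega_words Sig. fD d s0 U F w = 1}"

definition lang_gt :: "real \<Rightarrow> nat \<Rightarrow> complex vec \<Rightarrow> nat set \<Rightarrow> (nat \<Rightarrow> complex mat)
     \<Rightarrow> complex vec set \<Rightarrow> (nat \<Rightarrow> nat) set" where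
  "lang_gt lam d s0 Sig U F = {w \<in> omega_words Sig. fD d s0 U F w > lam}"

definition QBA_D_eq1 :: "(nat \<Rightarrow> nat) set set" where
  "QBA_D_eq1 = {L. \<exists>d s0 Sig U F. quantum_automaton d s0 Sig U F \<and> L = lang_eq1 d s0 Sig U F}"

definition QBA_D_gt :: "real \<Rightarrow> (nat \<Rightarrow> nat) set set" where
  "QBA_D_gt lam = {L. \<exists>d s0 Sig U F. quantum_automaton d s0 Sig U F \<and> L = lang_gt lam d s0 Sig U F}"

end

theory Submission imports Defs begin

definition nrm :: "complex vec \<Rightarrow> real" where
  "nrm v = (\<Sum>i<dim_vec v. (cmod (v $ i))\<^sup>2)"

lemma cself_nrm: "v \<bullet>c v = of_real (nrm v)"
proof -
  have "v \<bullet>c v = (\<Sum>i = 0..<dim_vec v. v $ i * cnj (v $ i))"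
    unfolding scalar_prod_def by simp
  also have "\<dots> = (\<Sum>i = 0..<dim_vec v. of_real ((cmod (v $ i))\<^sup>2))"
    by (intro sum.cong refl) (metis complex_norm_square)
  finally show ?thesis unfolding nrm_def by (simp add: atLeast0LessThan)
qed

lemma coord_le_nrm: "c < dim_vec v \<Longrightarrow> (cmod (v $ c))\<^sup>2 \<le> nrm v"
  unfolding nrm_def by (rule member_le_sum) auto

lemma coord_le_sqrt: "c < dim_vec v \<Longrightarrow> cmod (v $ c) \<le> sqrt (nrm v)"
  using coord_le_nrm real_le_rsqrt by blast

lemma nrm_nonneg: "0 \<le> nrm v" unfolding nrm_def by (auto intro: sum_nonneg)

lemma unit_nrm: "unit_vec_c d v \<Longrightarrow> nrm v = 1"
  unfolding unit_vec_c_def using cself_nrm[of v] by simp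

lemma adj_index: assumes "U \<in> carrier_mat d d" "k < d" "i < d"
  shows "mat_adjoint U $$ (k, i) = cnj (U $$ (i, k))"
  using assms unfolding mat_adjoint_def by (simp add: mat_of_rows_def)

lemma unitary_cself:
  assumes U: "unitary_c d U" and v: "v \<in> carrier_vec d"
  shows "(U *\<^sub>v v) \<bullet>c (U *\<^sub>v v) = v \<bullet>c v"
proof -
  have UC: "U \<in> carrier_mat d d" and UU: "mat_adjoint U * U = 1\<^sub>m d" using U unfolding unitary_c_def by auto
  have dv: "dim_vec v = d" using v by auto
  have adj: "mat_adjoint U \<in> carrier_mat d d" unfolding mat_adjoint_def using UC by auto
  have delta: "(\<Sum>i<d. cnj (U $$ (i, k)) * U $$ (i, j)) = (if k = j then 1 else 0)" if "k < d" "j < d" for k j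
  proof -
    have "(mat_adjoint U * U) $$ (k, j) = (\<Sum>i<d. cnj (U $$ (i, k)) * U $$ (i, j))"
      using that UC adj by (simp add: scalar_prod_def adj_index atLeast0LessThan)
    then show ?thesis using UU that by simp
  qed
  have "(U *\<^sub>v v) \<bullet>c (U *\<^sub>v v) = (\<Sum>i<d. (\<Sum>j<d. U $$ (i,j) * v $ j) * cnj (\<Sum>k<d. U $$ (i,k) * v $ k))"
    using UC dv by (simp add: scalar_prod_def atLeast0LessThan)
  also have "\<dots> = (\<Sum>i<d. \<Sum>j<d. \<Sum>k<d. (v $ j * cnj (v $ k)) * (cnj (U $$ (i, k)) * U $$ (i, j)))"
    apply (simp add: sum_distrib_left sum_distrib_right cnj_sum mult_ac)
    apply (rule sum.cong[OF refl]) apply (subst sum.swap) by (simp add: mult_ac)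
  also have "\<dots> = (\<Sum>j<d. \<Sum>k<d. (v $ j * cnj (v $ k)) * (\<Sum>i<d. cnj (U $$ (i, k)) * U $$ (i, j)))"
  proof -
    have "(\<Sum>i<d. \<Sum>j<d. \<Sum>k<d. (v $ j * cnj (v $ k)) * (cnj (U $$ (i, k)) * U $$ (i, j)))
       = (\<Sum>j<d. \<Sum>i<d. \<Sum>k<d. (v $ j * cnj (v $ k)) * (cnj (U $$ (i, k)) * U $$ (i, j)))"
      by (rule sum.swap)
    also have "\<dots> = (\<Sum>j<d. \<Sum>k<d. \<Sum>i<d. (v $ j * cnj (v $ k)) * (cnj (U $$ (i, k)) * U $$ (i, j)))"
      by (rule sum.cong[OF refl], rule sum.swap)
    finally show ?thesis by (simp add: sum_distrib_left)
  qed
  also have "\<dots> = (\<Sum>j<d. \<Sum>k<d. (v $ j * cnj (v $ k)) * (if k = j then 1 else 0))"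
    by (intro sum.cong refl) (simp add: delta)
  also have "\<dots> = (\<Sum>j<d. v $ j * cnj (v $ j))"
    by (simp add: if_distrib cong: if_cong)
  also have "\<dots> = v \<bullet>c v" using dv by (simp add: scalar_prod_def atLeast0LessThan)
  finally show ?thesis .
qed

lemma unitary_nrm: "unitary_c d U \<Longrightarrow> v \<in> carrier_vec d \<Longrightarrow> nrm (U *\<^sub>v v) = nrm v"
  using unitary_cself[of d U v] cself_nrm by (metis of_real_eq_iff)

lemma unitary_carrier: "unitary_c d U \<Longrightarrow> v \<in> carrier_vec d \<Longrightarrow> U *\<^sub>v v \<in> carrier_vec d"
  unfolding unitary_c_def by auto

fun seg :: "(nat \<Rightarrow> complex mat) \<Rightarrow> (nat \<Rightarrow> nat) \<Rightarrow> nat \<Rightarrow> nat \<Rightarrow> complex vec \<Rightarrow> complex vec" where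
  "seg U w s 0 v = v"
| "seg U w s (Suc t) v = U (w (s + t)) *\<^sub>v seg U w s t v"

lemma not_in_range:
  assumes "strict_mono ns" "ns i < m" "m < ns (Suc i)" shows "m \<notin> range ns"
proof
  assume "m \<in> range ns" then obtain j where j: "m = ns j" by auto
  have "i < j" using assms j strict_mono_less by metis
  moreover have "j < Suc i" using assms j strict_mono_less by metis
  ultimately show False by simp
qed

lemma dr_first:
  assumes "strict_mono ns" shows "m \<le> ns 0 \<Longrightarrow> dist_run s0 U w psi ns m = seg U w 0 m s0"
proof (induction m)
  case 0 then show ?case by simp
next
  case (Suc m)
  have "m \<notin> range ns"
  proof
    assume "m \<in> range ns" then obtain j where "m = ns j" by auto
    moreover have "ns 0 \<le> ns j" using assms by (simp add: strict_mono_less_eq)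
    ultimately show False using Suc.prems by simp
  qed
  then show ?case using Suc by simp
qed

lemma dr_seg:
  assumes "strict_mono ns"
  shows "0 < t \<Longrightarrow> ns i + t \<le> ns (Suc i) \<Longrightarrow> dist_run s0 U w psi ns (ns i + t) = seg U w (ns i) t psi"
proof (induction t)
  case 0 then show ?case by simp
next
  case (Suc t)
  show ?case
  proof (cases "t = 0")
    case True then show ?thesis by simp
  next
    case False
    have "ns i + t \<notin> range ns" using not_in_range[OF assms, of i "ns i + t"] False Suc.prems by simp
    then show ?thesis using Suc False by simp
  qed
qed

lemma dr_next:
  assumes "strict_mono ns"
  shows "dist_run s0 U w psi ns (ns (Suc i)) = seg U w (ns i) (ns (Suc i) - ns i) psi"
proof -
  have "ns i < ns (Suc i)" using assms by (simp add: strict_mono_less)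
  then show ?thesis using dr_seg[OF assms, of "ns (Suc i) - ns i" i s0 U w psi] by simp
qed

lemma seg_split: "seg U w s (m + n) v = seg U w (s + m) n (seg U w s m v)"
  by (induction n) (simp_all add: add.assoc)

lemma seg_shift: "(\<And>t. t < n \<Longrightarrow> U (w' (s' + t)) = U' (w (s + t))) \<Longrightarrow> seg U w' s' n v = seg U' w s n v"
  by (induction n) simp_all

definition good :: "nat \<Rightarrow> nat set \<Rightarrow> (nat \<Rightarrow> complex mat) \<Rightarrow> (nat \<Rightarrow> nat) \<Rightarrow> bool" where
  "good d Sig U w \<longleftrightarrow> (\<forall>i. unitary_c d (U (w i)))"

lemma seg_carrier: "good d Sig U w \<Longrightarrow> v \<in> carrier_vec d \<Longrightarrow> seg U w s n v \<in> carrier_vec d"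
  by (induction n) (auto simp: good_def unitary_carrier)

lemma seg_nrm: "good d Sig U w \<Longrightarrow> v \<in> carrier_vec d \<Longrightarrow> nrm (seg U w s n v) = nrm v"
proof (induction n)
  case (Suc n)
  then show ?case using unitary_nrm[of d "U (w (s + n))" "seg U w s n v"] seg_carrier[of d Sig U w v s n]
    by (simp add: good_def)
qed simp

lemma seg_minus: "good d Sig U w \<Longrightarrow> v \<in> carrier_vec d \<Longrightarrow> v' \<in> carrier_vec d \<Longrightarrow>
   seg U w s n (v - v') = seg U w s n v - seg U w s n v'"
proof (induction n)
  case 0 then show ?case by simp
next
  case (Suc n)
  have "U (w (s + n)) \<in> carrier_mat d d" using Suc.prems unfolding good_def unitary_c_def by auto
  then show ?case using Suc by (simp add: mult_minus_distrib_mat_vec seg_carrier)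
qed

lemma cprod_bound:
  assumes v: "v \<in> carrier_vec d" and p: "unit_vec_c d psi"
  shows "cmod (v \<bullet>c psi) \<le> real d * sqrt (nrm v)"
proof -
  have pc: "psi \<in> carrier_vec d" using p unfolding unit_vec_c_def by auto
  have "v \<bullet>c psi = (\<Sum>i<d. v $ i * cnj (psi $ i))"
    using pc by (simp add: scalar_prod_def atLeast0LessThan)
  then have "cmod (v \<bullet>c psi) \<le> (\<Sum>i<d. cmod (v $ i) * cmod (psi $ i))"
    by (metis (no_types, lifting) complex_mod_cnj norm_mult norm_sum sum.cong)
  also have "\<dots> \<le> (\<Sum>i<d. sqrt (nrm v) * 1)"
  proof (rule sum_mono)
    fix i assume "i \<in> {..<d}"
    then have i: "i < d" by simp
    have "cmod (v $ i) \<le> sqrt (nrm v)" using coord_le_sqrt[of i v] v i by auto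
    moreover have "cmod (psi $ i) \<le> sqrt (nrm psi)" using coord_le_sqrt[of i psi] pc i by auto
    moreover have "nrm psi = 1" using unit_nrm[OF p] .
    ultimately show "cmod (v $ i) * cmod (psi $ i) \<le> sqrt (nrm v) * 1"
      using mult_left_le[of "cmod (psi $ i)" "cmod (v $ i)"] by simp
  qed
  finally show ?thesis by simp
qed

lemma real_subseq:
  fixes f :: "nat \<Rightarrow> nat \<Rightarrow> real"
  assumes B: "\<And>c n. \<bar>f c n\<bar> \<le> B"
  shows "\<exists>r. strict_mono r \<and> (\<forall>c<m. convergent (\<lambda>n. f c (r n)))"
proof (induction m)
  case 0 show ?case by (rule exI[of _ id]) (simp add: strict_mono_def)
next
  case (Suc m)
  then obtain r where r: "strict_mono r" "\<forall>c<m. convergent (\<lambda>n. f c (r n))" by blast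
  obtain g where g: "strict_mono g" "monoseq (\<lambda>n. f m (r (g n)))"
    using seq_monosub[of "\<lambda>n. f m (r n)"] by blast
  have "Bseq (\<lambda>n. f m (r (g n)))" by (rule BseqI'[of _ B]) (simp add: B)
  then have cm: "convergent (\<lambda>n. f m (r (g n)))" using g(2) Bseq_monoseq_convergent by blast
  have "convergent (\<lambda>n. f c (r (g n)))" if "c < m" for c
  proof -
    have "convergent (\<lambda>n. f c (r n))" using r(2) that by simp
    then obtain L where "(\<lambda>n. f c (r n)) \<longlonglongrightarrow> L" unfolding convergent_def by (elim exE)
    from LIMSEQ_subseq_LIMSEQ[OF this g(1)] show ?thesis by (auto simp: convergent_def o_def)
  qed
  then have "\<forall>c<Suc m. convergent (\<lambda>n. f c ((r \<circ> g) n))"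
    using cm by (auto simp: less_Suc_eq)
  moreover have "strict_mono (r \<circ> g)" using r(1) g(1) by (rule strict_mono_o)
  ultimately show ?case by blast
qed

lemma close_pair:
  fixes f :: "nat \<Rightarrow> nat \<Rightarrow> real"
  assumes B: "\<And>c n. \<bar>f c n\<bar> \<le> B" and e: "0 < e"
  shows "\<exists>j l. j < l \<and> (\<forall>c<m. \<bar>f c l - f c j\<bar> < e)"
proof -
  obtain r where r: "strict_mono r" "\<forall>c<m. convergent (\<lambda>n. f c (r n))"
    using real_subseq[of f B m, OF B] by blast
  have ex: "\<exists>M. \<forall>a\<ge>M. \<forall>b\<ge>M. norm (f c (r a) - f c (r b)) < e" if "c < m" for c
  proof -
    have "Cauchy (\<lambda>n. f c (r n))" using r(2) that by (intro convergent_Cauchy) simp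
    from CauchyD[OF this e] show ?thesis .
  qed
  define M where "M c = (SOME M. \<forall>a\<ge>M. \<forall>b\<ge>M. norm (f c (r a) - f c (r b)) < e)" for c
  have M: "\<forall>c. c < m \<longrightarrow> (\<forall>a\<ge>M c. \<forall>b\<ge>M c. norm (f c (r a) - f c (r b)) < e)"
  proof (rule allI, rule impI)
    fix c assume "c < m"
    from someI_ex[OF ex[OF this]] show "\<forall>a\<ge>M c. \<forall>b\<ge>M c. norm (f c (r a) - f c (r b)) < e"
      unfolding M_def by simp
  qed
  define N where "N = (\<Sum>c<m. M c)"
  have MN: "M c \<le> N" if "c < m" for c
    unfolding N_def using that by (intro member_le_sum) simp_all
  have "\<forall>c<m. \<bar>f c (r (Suc N)) - f c (r N)\<bar> < e"
  proof (intro allI impI)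
    fix c assume c: "c < m"
    have "M c \<le> Suc N" "M c \<le> N" using MN[OF c] by auto
    then have "norm (f c (r (Suc N)) - f c (r N)) < e" using M c by simp
    then show "\<bar>f c (r (Suc N)) - f c (r N)\<bar> < e" by simp
  qed
  moreover have "r N < r (Suc N)" using r(1) by (simp add: strict_mono_Suc_iff)
  ultimately show ?thesis by (intro exI[of _ "r N"] exI[of _ "r (Suc N)"]) simp
qed

lemma recur:
  assumes U: "unitary_c d U" and x: "x \<in> carrier_vec d" and e: "0 < e"
  shows "\<exists>k>0. nrm (seg (\<lambda>_. U) (\<lambda>_. 0) 0 k x - x) < e"
proof -
  define y where "y n = seg (\<lambda>_. U) (\<lambda>_. 0::nat) 0 n x" for n
  have gd: "good d Sig (\<lambda>_. U) (\<lambda>_. 0)" using U by (simp add: good_def)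
  have yc: "y n \<in> carrier_vec d" for n unfolding y_def using seg_carrier[OF gd x] .
  have yn: "nrm (y n) = nrm x" for n unfolding y_def using seg_nrm[OF gd x] .
  define f where "f c n = (if c div 2 < d then (if even c then Re (y n $ (c div 2)) else Im (y n $ (c div 2))) else 0)" for c n
  have fb: "\<bar>f c n\<bar> \<le> sqrt (nrm x)" for c n
  proof -
    have "cmod (y n $ (c div 2)) \<le> sqrt (nrm x)" if "c div 2 < d"
      using coord_le_sqrt[of "c div 2" "y n"] carrier_vecD[OF yc[of n]] that yn[of n] by simp
    moreover have "\<bar>Re z\<bar> \<le> cmod z" "\<bar>Im z\<bar> \<le> cmod z" for z using abs_Re_le_cmod abs_Im_le_cmod by auto
    ultimately show ?thesis unfolding f_def
      using order_trans[of "\<bar>Re (y n $ (c div 2))\<bar>" "cmod (y n $ (c div 2))" "sqrt (nrm x)"]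
        order_trans[of "\<bar>Im (y n $ (c div 2))\<bar>" "cmod (y n $ (c div 2))" "sqrt (nrm x)"]
      by (simp add: nrm_nonneg)
  qed
  define eta where "eta = sqrt (e / (2 * real d + 1))"
  have eta: "0 < eta" unfolding eta_def using e by simp
  obtain j l where jl: "j < l" "\<forall>c<2*d. \<bar>f c l - f c j\<bar> < eta"
    using close_pair[of f "sqrt (nrm x)" eta "2*d", OF fb eta] by blast
  have ci: "(cmod (y l $ i - y j $ i))\<^sup>2 \<le> 2 * eta\<^sup>2" if "i < d" for i
  proof -
    have "\<bar>Re (y l $ i) - Re (y j $ i)\<bar> < eta" using jl(2)[rule_format, of "2*i"] that by (simp add: f_def)
    moreover have "\<bar>Im (y l $ i) - Im (y j $ i)\<bar> < eta" using jl(2)[rule_format, of "2*i+1"] that by (simp add: f_def)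
    moreover have sq: "a\<^sup>2 \<le> eta\<^sup>2" if "\<bar>a\<bar> < eta" for a :: real
    proof -
      have "\<bar>a\<bar>\<^sup>2 \<le> eta\<^sup>2" using that by (intro power_mono) auto
      then show ?thesis by simp
    qed
    ultimately have "(Re (y l $ i - y j $ i))\<^sup>2 \<le> eta\<^sup>2" "(Im (y l $ i - y j $ i))\<^sup>2 \<le> eta\<^sup>2"
      by simp_all
    then show ?thesis by (simp add: cmod_power2)
  qed
  have "nrm (y l - y j) = (\<Sum>i<d. (cmod (y l $ i - y j $ i))\<^sup>2)"
    unfolding nrm_def using carrier_vecD[OF yc[of j]] carrier_vecD[OF yc[of l]] by simp
  also have "\<dots> \<le> (\<Sum>i<d. 2 * eta\<^sup>2)" by (rule sum_mono) (simp add: ci)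
  also have "\<dots> = 2 * real d * (e / (2 * real d + 1))" unfolding eta_def using e by simp
  also have "\<dots> < e" using e by (simp add: field_simps)
  finally have small: "nrm (y l - y j) < e" .
  define k where "k = l - j"
  have lk: "l = k + j" unfolding k_def using jl by simp
  have yl: "y l = seg (\<lambda>_. U) (\<lambda>_. 0::nat) 0 j (y k)"
    unfolding lk y_def seg_split by (rule seg_shift) simp
  have yj: "y j = seg (\<lambda>_. U) (\<lambda>_. 0::nat) 0 j x" unfolding y_def ..
  have "y l - y j = seg (\<lambda>_. U) (\<lambda>_. 0::nat) 0 j (y k - x)"
    unfolding yl yj using seg_minus[OF gd yc x] by simp
  moreover have "y k - x \<in> carrier_vec d" using yc[of k] x by simp
  ultimately have "nrm (y k - x) < e" using small seg_nrm[OF gd, of "y k - x" 0 j] by simp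
  moreover have "0 < k" unfolding k_def using jl by simp
  ultimately show ?thesis unfolding y_def by blast
qed


definition val :: "complex vec \<Rightarrow> (nat \<Rightarrow> complex mat) \<Rightarrow> (nat \<Rightarrow> nat) \<Rightarrow> complex vec \<Rightarrow> (nat \<Rightarrow> nat) \<Rightarrow> nat \<Rightarrow> real" where
  "val s0 U w psi ns i = (cmod (dist_run s0 U w psi ns (ns i) \<bullet>c psi))\<^sup>2"

definition SS :: "nat \<Rightarrow> complex vec \<Rightarrow> (nat \<Rightarrow> complex mat) \<Rightarrow> complex vec set \<Rightarrow> (nat \<Rightarrow> nat) \<Rightarrow> real set" where
  "SS d s0 U F w = {(INF i. val s0 U w psi ns i) | psi ns. psi \<in> F \<and> unit_vec_c d psi \<and> strict_mono ns}"

lemma fD_SS: "fD d s0 U F w = (if SS d s0 U F w = {} then 0 else Sup (SS d s0 U F w))"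
  unfolding fD_def SS_def val_def Let_def by simp

lemma val_nonneg: "0 \<le> val s0 U w psi ns i" unfolding val_def by simp

lemma INF_val_le: "(INF i. val s0 U w psi ns i) \<le> val s0 U w psi ns i"
  by (rule cINF_lower) (auto intro!: bdd_belowI[of _ 0] simp: val_nonneg)

lemma good_omega: "quantum_automaton d s0 Sig U F \<Longrightarrow> w \<in> omega_words Sig \<Longrightarrow> good d Sig U w"
  unfolding quantum_automaton_def omega_words_def good_def by auto

lemma val0_bound:
  assumes QA: "quantum_automaton d s0 Sig U F" and w: "w \<in> omega_words Sig"
    and p: "unit_vec_c d psi" and ns: "strict_mono ns"
  shows "val s0 U w psi ns 0 \<le> (real d)\<^sup>2"
proof -
  have gd: "good d Sig U w" using good_omega[OF QA w] .
  have s0: "unit_vec_c d s0" using QA unfolding quantum_automaton_def by auto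
  then have s0c: "s0 \<in> carrier_vec d" unfolding unit_vec_c_def by auto
  have dr: "dist_run s0 U w psi ns (ns 0) = seg U w 0 (ns 0) s0" using dr_first[OF ns] by simp
  have "cmod (seg U w 0 (ns 0) s0 \<bullet>c psi) \<le> real d * sqrt (nrm (seg U w 0 (ns 0) s0))"
    by (rule cprod_bound[OF seg_carrier[OF gd s0c] p])
  also have "\<dots> = real d" using seg_nrm[OF gd s0c] unit_nrm[OF s0] by simp
  finally show ?thesis unfolding val_def dr by (simp add: power_mono)
qed

lemma SS_bdd:
  assumes QA: "quantum_automaton d s0 Sig U F" and w: "w \<in> omega_words Sig"
  shows "bdd_above (SS d s0 U F w)"
proof (rule bdd_aboveI[of _ "(real d)\<^sup>2"])
  fix x assume "x \<in> SS d s0 U F w"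
  then obtain psi ns where x: "x = (INF i. val s0 U w psi ns i)" and p: "unit_vec_c d psi" and ns: "strict_mono ns"
    unfolding SS_def by blast
  show "x \<le> (real d)\<^sup>2" unfolding x using INF_val_le[of s0 U w psi ns 0] val0_bound[OF QA w p ns] by linarith
qed

lemma fD_ge:
  assumes QA: "quantum_automaton d s0 Sig U F" and w: "w \<in> omega_words Sig"
    and pF: "psi \<in> F" and p: "unit_vec_c d psi" and ns: "strict_mono ns"
  shows "(INF i. val s0 U w psi ns i) \<le> fD d s0 U F w"
proof -
  have mem: "(INF i. val s0 U w psi ns i) \<in> SS d s0 U F w" unfolding SS_def using pF p ns by blast
  then have "SS d s0 U F w \<noteq> {}" by blast
  then show ?thesis unfolding fD_SS using cSup_upper[OF mem SS_bdd[OF QA w]] by simp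
qed

lemma fD_elem:
  assumes lam: "0 \<le> lam" and gt: "lam < fD d s0 U F w"
  shows "\<exists>psi ns. psi \<in> F \<and> unit_vec_c d psi \<and> strict_mono ns \<and> lam < (INF i. val s0 U w psi ns i)"
proof -
  have ne: "SS d s0 U F w \<noteq> {}" using lam gt unfolding fD_SS by auto
  then have "lam < Sup (SS d s0 U F w)" using gt unfolding fD_SS by simp
  then obtain x where "x \<in> SS d s0 U F w" "lam < x" using ne less_cSupE by blast
  then show ?thesis unfolding SS_def by blast
qed

lemma ins_lemma:
  assumes QA: "quantum_automaton d s0 Sig U F" and w: "w \<in> omega_words Sig" and a: "a \<in> Sig"
    and lam: "0 \<le> lam" and gt: "lam < fD d s0 U F w"
  shows "\<exists>k>0. lam < fD d s0 U F (\<lambda>i. if i < k then a else w (i - k))"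
proof -
  obtain psi ns where pF: "psi \<in> F" and p: "unit_vec_c d psi" and ns: "strict_mono ns"
    and lt: "lam < (INF i. val s0 U w psi ns i)"
    using fD_elem[OF lam gt] by blast
  have gd: "good d Sig U w" using good_omega[OF QA w] .
  have s0: "unit_vec_c d s0" using QA unfolding quantum_automaton_def by auto
  then have s0c: "s0 \<in> carrier_vec d" unfolding unit_vec_c_def by auto
  have Ua: "unitary_c d (U a)" using QA a unfolding quantum_automaton_def by auto
  define x where "x = seg U w 0 (ns 0) s0"
  have xc: "x \<in> carrier_vec d" unfolding x_def using seg_carrier[OF gd s0c] .
  have g0: "lam < val s0 U w psi ns 0" using lt INF_val_le[of s0 U w psi ns 0] by linarith
  define c0 where "c0 = cmod (x \<bullet>c psi)"
  have g0': "lam < c0\<^sup>2" using g0 unfolding val_def c0_def x_def using dr_first[OF ns, of "ns 0"] by simp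
  have c0: "sqrt lam < c0"
  proof -
    have "sqrt lam < sqrt (c0\<^sup>2)" using g0' by (simp del: real_sqrt_abs)
    moreover have "sqrt (c0\<^sup>2) = c0" unfolding c0_def by simp
    ultimately show ?thesis by simp
  qed
  define del where "del = c0 - sqrt lam"
  have del: "0 < del" unfolding del_def using c0 by simp
  obtain k where k: "0 < k" and kz: "nrm (seg (\<lambda>_. U a) (\<lambda>_. 0::nat) 0 k s0 - s0) < (del / (real d + 1))\<^sup>2"
    using recur[OF Ua s0c, of "(del / (real d + 1))\<^sup>2"] del by auto
  define z where "z = seg (\<lambda>_. U a) (\<lambda>_. 0::nat) 0 k s0"
  have gdA: "good d Sig (\<lambda>_. U a) (\<lambda>_. 0::nat)" using Ua by (simp add: good_def)
  have zc: "z \<in> carrier_vec d" unfolding z_def using seg_carrier[OF gdA s0c] .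
  define w' where "w' = (\<lambda>i. if i < k then a else w (i - k))"
  define ns' where "ns' = (\<lambda>i. ns i + k)"
  have w': "w' \<in> omega_words Sig" using w a unfolding w'_def omega_words_def by auto
  have ns': "strict_mono ns'" using ns unfolding ns'_def strict_mono_def by simp
  have "dist_run s0 U w' psi ns' (ns' 0) = seg U w' 0 (k + ns 0) s0"
    using dr_first[OF ns', of "ns' 0"] unfolding ns'_def by (simp add: add.commute)
  also have "\<dots> = seg U w' k (ns 0) (seg U w' 0 k s0)" by (simp add: seg_split)
  also have "seg U w' 0 k s0 = z" unfolding z_def by (rule seg_shift) (simp add: w'_def)
  also have "seg U w' k (ns 0) z = seg U w 0 (ns 0) z" by (rule seg_shift) (simp add: w'_def)
  finally have dr0: "dist_run s0 U w' psi ns' (ns' 0) = seg U w 0 (ns 0) z" .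
  have diff: "seg U w 0 (ns 0) z \<bullet>c psi - x \<bullet>c psi = seg U w 0 (ns 0) (z - s0) \<bullet>c psi"
  proof -
    have pc: "psi \<in> carrier_vec d" using p unfolding unit_vec_c_def by auto
    have "seg U w 0 (ns 0) (z - s0) = seg U w 0 (ns 0) z - x"
      unfolding x_def using seg_minus[OF gd zc s0c] .
    moreover have "(seg U w 0 (ns 0) z - x) \<bullet>c psi = seg U w 0 (ns 0) z \<bullet>c psi - x \<bullet>c psi"
      using seg_carrier[OF gd zc] xc pc by (intro minus_scalar_prod_distrib) auto
    ultimately show ?thesis by simp
  qed
  have "cmod (seg U w 0 (ns 0) (z - s0) \<bullet>c psi) \<le> real d * sqrt (nrm (seg U w 0 (ns 0) (z - s0)))"
    using zc s0c by (intro cprod_bound[OF seg_carrier[OF gd] p]) simp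
  also have "nrm (seg U w 0 (ns 0) (z - s0)) = nrm (z - s0)"
    using zc s0c by (intro seg_nrm[OF gd]) simp
  also have "real d * sqrt (nrm (z - s0)) \<le> real d * (del / (real d + 1))"
  proof -
    have "sqrt (nrm (z - s0)) < sqrt ((del / (real d + 1))\<^sup>2)"
      using kz unfolding z_def by (rule real_sqrt_less_mono)
    also have "\<dots> = del / (real d + 1)" using del by simp
    finally have "sqrt (nrm (z - s0)) \<le> del / (real d + 1)" by simp
    then show ?thesis by (rule mult_left_mono) simp
  qed
  also have "\<dots> < del" using del by (simp add: field_simps)
  finally have small: "cmod (seg U w 0 (ns 0) z \<bullet>c psi - x \<bullet>c psi) < del" using diff by simp
  have "c0 - cmod (seg U w 0 (ns 0) z \<bullet>c psi) \<le> cmod (seg U w 0 (ns 0) z \<bullet>c psi - x \<bullet>c psi)"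
    unfolding c0_def by (metis norm_minus_commute norm_triangle_ineq2)
  then have "sqrt lam < cmod (seg U w 0 (ns 0) z \<bullet>c psi)" using small unfolding del_def by linarith
  then have "(sqrt lam)\<^sup>2 < (cmod (seg U w 0 (ns 0) z \<bullet>c psi))\<^sup>2"
    using lam by (intro power_strict_mono) auto
  then have v0: "lam < val s0 U w' psi ns' 0" unfolding val_def dr0 using lam by simp
  have vS: "val s0 U w' psi ns' (Suc i) = val s0 U w psi ns (Suc i)" for i
  proof -
    have "dist_run s0 U w' psi ns' (ns' (Suc i)) = seg U w' (ns i + k) (ns (Suc i) - ns i) psi"
      using dr_next[OF ns', of s0 U w' psi i] unfolding ns'_def by simp
    also have "\<dots> = seg U w (ns i) (ns (Suc i) - ns i) psi" by (rule seg_shift) (simp add: w'_def)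
    also have "\<dots> = dist_run s0 U w psi ns (ns (Suc i))" using dr_next[OF ns] by simp
    finally show ?thesis unfolding val_def by simp
  qed
  have "min (val s0 U w' psi ns' 0) (INF i. val s0 U w psi ns i) \<le> (INF i. val s0 U w' psi ns' i)"
  proof (rule cINF_greatest)
    fix i show "min (val s0 U w' psi ns' 0) (INF i. val s0 U w psi ns i) \<le> val s0 U w' psi ns' i"
    proof (cases i)
      case (Suc j) then show ?thesis using vS[of j] INF_val_le[of s0 U w psi ns "Suc j"] by simp
    qed simp
  qed simp
  then have "lam < (INF i. val s0 U w' psi ns' i)" using v0 lt by linarith
  also have "\<dots> \<le> fD d s0 U F w'" by (rule fD_ge[OF QA w' pF p ns'])
  finally show ?thesis using k unfolding w'_def by blast
qed


definition RA :: "complex mat" where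
  "RA = mat 2 2 (\<lambda>(i,j). if i = j then 3/5 else if i = 0 then -4/5 else 4/5)"
definition RB :: "complex mat" where
  "RB = mat 2 2 (\<lambda>(i,j). if i = j then 3/5 else if i = 0 then 4/5 else -4/5)"
definition UA :: "nat \<Rightarrow> complex mat" where
  "UA n = (if n = 1 then RA else if n = 2 then RB else 1\<^sub>m 2)"
definition FA :: "complex vec set" where
  "FA = {v \<in> carrier_vec 2. v $ 1 = 0}"
definition e1 :: "complex vec" where "e1 = unit_vec 2 0"

lemma sum2: "(\<Sum>i<(2::nat). f i) = f 0 + (f 1 :: 'a :: comm_monoid_add)"
  by (simp add: eval_nat_numeral)

lemma sum02: "(\<Sum>i = 0..<(2::nat). f i) = f 0 + (f 1 :: 'a :: comm_monoid_add)"
  by (simp add: eval_nat_numeral)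

lemma less2: "(i::nat) < 2 \<longleftrightarrow> i = 0 \<or> i = 1" by auto

lemma adj_RA: "mat_adjoint RA = RB"
  by (rule eq_matI) (auto simp: mat_adjoint_def RA_def RB_def mat_of_rows_def less2)

lemma adj_RB: "mat_adjoint RB = RA"
  by (rule eq_matI) (auto simp: mat_adjoint_def RA_def RB_def mat_of_rows_def less2)

lemma adj_one: "mat_adjoint (1\<^sub>m 2 :: complex mat) = 1\<^sub>m 2"
  by (rule eq_matI) (auto simp: mat_adjoint_def mat_of_rows_def less2)

lemma RA_RB: "RA * RB = 1\<^sub>m 2"
  by (rule eq_matI) (auto simp: RA_def RB_def scalar_prod_def sum02 less2 col_def row_def)

lemma RB_RA: "RB * RA = 1\<^sub>m 2"
  by (rule eq_matI) (auto simp: RA_def RB_def scalar_prod_def sum02 less2 col_def row_def)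

lemma QA_A: "quantum_automaton 2 e1 {0,1,2} UA FA"
  unfolding quantum_automaton_def
proof (intro conjI)
  show "unit_vec_c 2 e1" unfolding unit_vec_c_def e1_def by (simp add: scalar_prod_def sum02)
  show "\<forall>\<sigma>\<in>{0,1,2}. unitary_c 2 (UA \<sigma>)"
    by (auto simp: unitary_c_def UA_def adj_RA adj_RB adj_one RA_RB RB_RA) (auto simp: RA_def RB_def)
  show "subspace_c 2 FA" unfolding subspace_c_def FA_def by auto
qed auto


fun pq :: "nat \<Rightarrow> int \<times> int" where
  "pq 0 = (1, 0)"
| "pq (Suc j) = (3 * fst (pq j) - 4 * snd (pq j), 4 * fst (pq j) + 3 * snd (pq j))"

lemma pq_sq: "(fst (pq j))\<^sup>2 + (snd (pq j))\<^sup>2 = 25 ^ j"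
  by (induction j) (simp_all add: power2_eq_square algebra_simps)

lemma modstep:
  fixes p q :: int
  assumes hp: "p mod 5 = 3" and hq: "q mod 5 = 4"
  shows "(3 * p - 4 * q) mod 5 = 3 \<and> (4 * p + 3 * q) mod 5 = 4"
proof -
  define a where "a = p div 5"
  define b where "b = q div 5"
  have p: "p = 5 * a + 3" unfolding a_def using div_mult_mod_eq[of p 5] hp by linarith
  have q: "q = 5 * b + 4" unfolding b_def using div_mult_mod_eq[of q 5] hq by linarith
  have e1: "3 * p - 4 * q = 3 + 5 * (3 * a - 4 * b - 2)" unfolding p q by (simp add: algebra_simps)
  have e2: "4 * p + 3 * q = 4 + 5 * (4 * a + 3 * b + 4)" unfolding p q by (simp add: algebra_simps)
  have m: "\<And>(c::int) x. (c + 5 * x) mod 5 = c mod 5" by simp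
  show ?thesis by (simp only: e1 e2 m) simp
qed

lemma pq_mod: "0 < j \<Longrightarrow> fst (pq j) mod 5 = 3 \<and> snd (pq j) mod 5 = 4"
proof (induction j)
  case 0 then show ?case by simp
next
  case (Suc j)
  show ?case
  proof (cases "j = 0")
    case True then show ?thesis by simp
  next
    case False
    then have "fst (pq j) mod 5 = 3" "snd (pq j) mod 5 = 4" using Suc by auto
    then show ?thesis using modstep by simp
  qed
qed

lemma q_nz: "0 < j \<Longrightarrow> snd (pq j) \<noteq> 0"
proof
  assume "0 < j" "snd (pq j) = 0"
  then show False using pq_mod[of j] by simp
qed

definition PP :: "nat \<Rightarrow> complex" where "PP j = of_int (fst (pq j)) / 5 ^ j"
definition QQ :: "nat \<Rightarrow> complex" where "QQ j = of_int (snd (pq j)) / 5 ^ j"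

lemma PP_lt: "0 < j \<Longrightarrow> (cmod (PP j))\<^sup>2 < 1"
proof -
  assume j: "0 < j"
  have "(fst (pq j))\<^sup>2 < 25 ^ j" using pq_sq[of j] q_nz[OF j]
  proof -
    have "0 < (snd (pq j))\<^sup>2" using q_nz[OF j] by simp
    then show ?thesis using pq_sq[of j] by linarith
  qed
  then have "real_of_int ((fst (pq j))\<^sup>2) < real_of_int (25 ^ j)" by linarith
  moreover have "(5::real) ^ j * 5 ^ j = 25 ^ j" by (simp add: power_mult_distrib[symmetric])
  ultimately have "(real_of_int (fst (pq j)))\<^sup>2 < (5 ^ j)\<^sup>2" by (simp add: power2_eq_square)
  moreover have "cmod (PP j) = \<bar>real_of_int (fst (pq j))\<bar> / 5 ^ j"
    unfolding PP_def by (simp add: norm_divide norm_power)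
  ultimately show ?thesis by (simp add: power_divide)
qed

definition wk :: "nat \<Rightarrow> nat \<Rightarrow> nat" where "wk k i = (if i < k then 1 else 0)"

lemma seg_wk:
  assumes v: "v \<in> carrier_vec 2" "v $ 1 = 0"
  shows "seg UA (wk k) 0 n v = vec 2 (\<lambda>i. if i = 0 then v $ 0 * PP (min n k) else v $ 0 * QQ (min n k))"
proof (induction n)
  case 0
  show ?case using v by (intro eq_vecI) (auto simp: PP_def QQ_def less2)
next
  case (Suc n)
  show ?case
  proof (cases "n < k")
    case True
    then have mn: "min (Suc n) k = Suc (min n k)" "min n k = n" by auto
    show ?thesis using True unfolding seg.simps Suc mn
      by (intro eq_vecI) (auto simp: UA_def wk_def RA_def scalar_prod_def sum02 less2 PP_def QQ_def field_simps)
  next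
    case False
    then have mn: "min (Suc n) k = min n k" by auto
    show ?thesis using False unfolding seg.simps Suc mn
      by (simp add: UA_def wk_def)
  qed
qed


lemma dr_carrier:
  assumes "good d Sig U w" "s0 \<in> carrier_vec d" "psi \<in> carrier_vec d"
  shows "dist_run s0 U w psi ns m \<in> carrier_vec d"
  using assms by (induction m) (auto simp: good_def unitary_carrier)

lemma psiA:
  assumes "psi \<in> FA" "unit_vec_c 2 psi"
  shows "cmod (psi $ 0) = 1" "v \<in> carrier_vec 2 \<Longrightarrow> v \<bullet>c psi = v $ 0 * cnj (psi $ 0)"
proof -
  have pc: "psi \<in> carrier_vec 2" "psi $ 1 = 0" using assms(1) unfolding FA_def by auto
  have "nrm psi = 1" using unit_nrm[OF assms(2)] .
  then have "(cmod (psi $ 0))\<^sup>2 = 1" using pc unfolding nrm_def by (simp add: sum2)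
  then show "cmod (psi $ 0) = 1" using norm_ge_zero[of "psi $ 0"] by (auto simp: power2_eq_1_iff)
  show "v \<in> carrier_vec 2 \<Longrightarrow> v \<bullet>c psi = v $ 0 * cnj (psi $ 0)"
    using pc by (simp add: scalar_prod_def sum02)
qed

lemma goodA: "w \<in> omega_words {0,1,2} \<Longrightarrow> good 2 {0,1,2} UA w"
  using good_omega[OF QA_A] .

lemma e1c: "e1 \<in> carrier_vec 2" unfolding e1_def by simp
lemma e1u: "unit_vec_c 2 e1" using QA_A unfolding quantum_automaton_def by simp

lemma valA:
  assumes w: "w \<in> omega_words {0,1,2}" and pF: "psi \<in> FA" and p: "unit_vec_c 2 psi"
  shows "val e1 UA w psi ns i = (cmod (dist_run e1 UA w psi ns (ns i) $ 0))\<^sup>2"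
proof -
  have pc: "psi \<in> carrier_vec 2" using pF unfolding FA_def by auto
  have "dist_run e1 UA w psi ns (ns i) \<in> carrier_vec 2" using dr_carrier[OF goodA[OF w] e1c pc] .
  then show ?thesis unfolding val_def using psiA[OF pF p] by (simp add: norm_mult)
qed

lemma SSA_le1:
  assumes w: "w \<in> omega_words {0,1,2}" and x: "x \<in> SS 2 e1 UA FA w"
  shows "x \<le> 1"
proof -
  obtain psi ns where xe: "x = (INF i. val e1 UA w psi ns i)" and pF: "psi \<in> FA"
    and p: "unit_vec_c 2 psi" and ns: "strict_mono ns"
    using x unfolding SS_def by blast
  have dr: "dist_run e1 UA w psi ns (ns 0) = seg UA w 0 (ns 0) e1" using dr_first[OF ns] by simp
  have "(cmod (seg UA w 0 (ns 0) e1 $ 0))\<^sup>2 \<le> nrm (seg UA w 0 (ns 0) e1)"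
    using carrier_vecD[OF seg_carrier[OF goodA[OF w] e1c, of 0 "ns 0"]] by (intro coord_le_nrm) simp
  also have "\<dots> = 1" using seg_nrm[OF goodA[OF w] e1c] unit_nrm[OF e1u] by simp
  finally have "val e1 UA w psi ns 0 \<le> 1" using valA[OF w pF p] dr by simp
  then show ?thesis unfolding xe using INF_val_le[of e1 UA w psi ns 0] by linarith
qed

lemma fDA_one:
  assumes w: "w \<in> omega_words {0,1,2}" and pF: "psi \<in> FA" and p: "unit_vec_c 2 psi"
    and ns: "strict_mono ns" and one: "\<And>i. val e1 UA w psi ns i = 1"
  shows "fD 2 e1 UA FA w = 1"
proof -
  have "(INF i. val e1 UA w psi ns i) = (INF i::nat. (1::real))" using one by simp
  also have "\<dots> = 1" by simp
  finally have eq: "(INF i. val e1 UA w psi ns i) = 1" .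
  have "(INF i. val e1 UA w psi ns i) \<in> SS 2 e1 UA FA w" unfolding SS_def using pF p ns by blast
  then have mem: "1 \<in> SS 2 e1 UA FA w" using eq by simp
  then have ne: "SS 2 e1 UA FA w \<noteq> {}" by blast
  have "Sup (SS 2 e1 UA FA w) = 1"
    by (rule cSup_eq_maximum[OF mem]) (rule SSA_le1[OF w])
  then show ?thesis unfolding fD_SS using ne by simp
qed

lemma e1_self: "e1 \<bullet>c e1 = 1" using e1u unfolding unit_vec_c_def by simp

lemma w0_in: "fD 2 e1 UA FA (\<lambda>_. 0) = 1"
proof (rule fDA_one[where psi = e1 and ns = id])
  show "(\<lambda>_. 0) \<in> omega_words {0, 1, 2}" unfolding omega_words_def by simp
  show "e1 \<in> FA" unfolding FA_def e1_def by simp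
  show "unit_vec_c 2 e1" by (rule e1u)
  show "strict_mono (id :: nat \<Rightarrow> nat)" by (simp add: strict_mono_def)
  fix i
  have "dist_run e1 UA (\<lambda>_. 0) e1 id i = e1"
    by (cases i) (simp_all add: UA_def e1c)
  then show "val e1 UA (\<lambda>_. 0) e1 id i = 1" unfolding val_def using e1_self by simp
qed

definition wac :: "nat \<Rightarrow> nat" where "wac i = (if i = 0 then 1 else if i = 1 then 2 else 0)"

lemma wac_in: "fD 2 e1 UA FA wac = 1"
proof (rule fDA_one[where psi = e1 and ns = "\<lambda>i. i + 2"])
  show "wac \<in> omega_words {0, 1, 2}" unfolding omega_words_def wac_def by simp
  show "e1 \<in> FA" unfolding FA_def e1_def by simp
  show "unit_vec_c 2 e1" by (rule e1u)
  show "strict_mono (\<lambda>i::nat. i + 2)" by (simp add: strict_mono_def)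
  fix i
  have r0: "0 \<notin> range (\<lambda>i::nat. i + 2)" "1 \<notin> range (\<lambda>i::nat. i + 2)" by auto
  have d2: "dist_run e1 UA wac e1 (\<lambda>i. i + 2) 2 = e1"
  proof -
    have "dist_run e1 UA wac e1 (\<lambda>i. i + 2) 2 = RB *\<^sub>v (RA *\<^sub>v e1)"
      using r0 by (simp add: numeral_2_eq_2 UA_def wac_def)
    also have "\<dots> = (RB * RA) *\<^sub>v e1"
    proof -
      have "RB \<in> carrier_mat 2 2" "RA \<in> carrier_mat 2 2" by (simp_all add: RA_def RB_def)
      from assoc_mult_mat_vec[OF this e1c] show ?thesis by simp
    qed
    also have "\<dots> = e1" using e1c by (simp add: RB_RA)
    finally show ?thesis .
  qed
  have "dist_run e1 UA wac e1 (\<lambda>i. i + 2) (i + 2) = e1"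
  proof (cases i)
    case 0 then show ?thesis using d2 by (simp add: numeral_2_eq_2 del: dist_run.simps)
  next
    case (Suc j)
    have "j + 2 \<in> range (\<lambda>i::nat. i + 2)" using rangeI[of "\<lambda>i::nat. i + 2" j] by simp
    then have "dist_run e1 UA wac e1 (\<lambda>i. i + 2) (Suc (j + 2)) = e1"
      by (simp add: UA_def wac_def e1c del: dist_run.simps(1))
    then show ?thesis using Suc by (simp add: add.commute)
  qed
  then show "val e1 UA wac e1 (\<lambda>i. i + 2) i = 1" unfolding val_def using e1_self by simp
qed

lemma wk_omega: "wk k \<in> omega_words {0,1,2}" unfolding omega_words_def wk_def by simp

lemma wk_lt:
  assumes k: "0 < k"
  shows "fD 2 e1 UA FA (wk k) < 1"
proof -
  define c where "c = Max ((\<lambda>j. (cmod (PP j))\<^sup>2) ` {1..k})"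
  have c1: "c < 1" unfolding c_def using k PP_lt by (subst Max_less_iff) auto
  have cge: "(cmod (PP j))\<^sup>2 \<le> c" if "1 \<le> j" "j \<le> k" for j
    unfolding c_def using that by (intro Max_ge) auto
  have le: "x \<le> c" if x: "x \<in> SS 2 e1 UA FA (wk k)" for x
  proof -
    obtain psi ns where xe: "x = (INF i. val e1 UA (wk k) psi ns i)" and pF: "psi \<in> FA"
      and p: "unit_vec_c 2 psi" and ns: "strict_mono ns"
      using x unfolding SS_def by blast
    have pc: "psi \<in> carrier_vec 2" "psi $ 1 = 0" using pF unfolding FA_def by auto
    have ex: "\<exists>i. val e1 UA (wk k) psi ns i \<le> c"
    proof (cases "ns 0 = 0")
      case False
      have "dist_run e1 UA (wk k) psi ns (ns 0) = seg UA (wk k) 0 (ns 0) e1" using dr_first[OF ns] by simp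
      also have "\<dots> = vec 2 (\<lambda>i. if i = 0 then e1 $ 0 * PP (min (ns 0) k) else e1 $ 0 * QQ (min (ns 0) k))"
        by (rule seg_wk) (simp_all add: e1_def)
      finally have "val e1 UA (wk k) psi ns 0 = (cmod (PP (min (ns 0) k)))\<^sup>2"
        using valA[OF wk_omega pF p] by (simp add: e1_def)
      also have "\<dots> \<le> c" using False k by (intro cge) auto
      finally show ?thesis by blast
    next
      case True
      have "ns 0 < ns 1" using ns by (simp add: strict_mono_less)
      then have n1: "0 < ns 1" using True by simp
      have "dist_run e1 UA (wk k) psi ns (ns (Suc 0)) = seg UA (wk k) 0 (ns 1) psi"
        using dr_next[OF ns, of e1 UA "wk k" psi 0] True by simp
      also have "\<dots> = vec 2 (\<lambda>i. if i = 0 then psi $ 0 * PP (min (ns 1) k) else psi $ 0 * QQ (min (ns 1) k))"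
        by (rule seg_wk[OF pc])
      finally have "val e1 UA (wk k) psi ns 1 = (cmod (PP (min (ns 1) k)))\<^sup>2"
        using valA[where ns=ns and i=1, OF wk_omega pF p] psiA(1)[OF pF p] by (simp add: norm_mult)
      also have "\<dots> \<le> c" using n1 k by (intro cge) auto
      finally show ?thesis by blast
    qed
    then obtain i where "val e1 UA (wk k) psi ns i \<le> c" by blast
    then show ?thesis unfolding xe using INF_val_le[of e1 UA "wk k" psi ns i] by linarith
  qed
  have "fD 2 e1 UA FA (wk k) \<le> c"
  proof (cases "SS 2 e1 UA FA (wk k) = {}")
    case True
    have "0 \<le> c" unfolding c_def using k by (intro order_trans[OF _ Max_ge[of _ "(cmod (PP 1))\<^sup>2"]]) auto
    then show ?thesis unfolding fD_SS using True by simp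
  next
    case False
    then show ?thesis unfolding fD_SS using le by (simp add: cSup_least)
  qed
  then show ?thesis using c1 by linarith
qed

theorem theorem6:
  fixes lam :: real
  assumes "0 \<le> lam" and "lam < 1"
  shows "\<not> (QBA_D_eq1 \<subseteq> QBA_D_gt lam)"
proof
  assume sub: "QBA_D_eq1 \<subseteq> QBA_D_gt lam"
  define L where "L = lang_eq1 2 e1 {0,1,2} UA FA"
  have "L \<in> QBA_D_eq1" unfolding QBA_D_eq1_def L_def using QA_A by blast
  then have "L \<in> QBA_D_gt lam" using sub by blast
  then obtain d s0 Sig U F where QB: "quantum_automaton d s0 Sig U F" and LB: "L = lang_gt lam d s0 Sig U F"
    unfolding QBA_D_gt_def by blast
  have "(\<lambda>_. 0) \<in> L" unfolding L_def lang_eq1_def using w0_in by (simp add: omega_words_def)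
  then have w0B: "(\<lambda>_. 0) \<in> omega_words Sig" "lam < fD d s0 U F (\<lambda>_. 0)"
    unfolding LB lang_gt_def by auto
  have "wac \<in> L" unfolding L_def lang_eq1_def using wac_in by (simp add: omega_words_def wac_def)
  then have "wac \<in> omega_words Sig" unfolding LB lang_gt_def by auto
  then have "wac 0 \<in> Sig" unfolding omega_words_def by blast
  then have a: "1 \<in> Sig" by (simp add: wac_def)
  have z: "0 \<in> Sig" using w0B(1) unfolding omega_words_def by simp
  obtain k where k: "0 < k" and gtk: "lam < fD d s0 U F (\<lambda>i. if i < k then 1 else (\<lambda>_. 0::nat) (i - k))"
    using ins_lemma[OF QB w0B(1) a assms(1) w0B(2)] by blast
  have "(\<lambda>i. if i < k then 1 else (\<lambda>_. 0::nat) (i - k)) = wk k" by (simp add: wk_def fun_eq_iff)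
  with gtk have "lam < fD d s0 U F (wk k)" by simp
  moreover have "wk k \<in> omega_words Sig" using a z unfolding omega_words_def wk_def by simp
  ultimately have "wk k \<in> L" unfolding LB lang_gt_def by simp
  then have "fD 2 e1 UA FA (wk k) = 1" unfolding L_def lang_eq1_def by simp
  then show False using wk_lt[OF k] by simp
qed

end
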